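(* Let $\ell\ge1$. Let $c_i=(c_{i,0},\dots,c_{i,\ell_i-1})$ and $c_j=(c_{j,0},\dots,c_{j,\ell_j-1})$ be two distinct codewords of a binary prefix-free code with lengths $\ell_i\le\ell_j$, and let $y_i=\sum_{t=0}^{\ell_i-1}c_{i,t}x^t$ and $y_j=\sum_{t=0}^{\ell_j-1}c_{j,t}x^t$ in $F_2[x]$. Let $r_0\in F_2[[x]]$ be arbitrary, let $s\in F_2[x]$ have degree less than $\ell$, and define the shares $$Z_i\equiv r_0+s\,y_i\pmod{x^{\ell_i+\ell-1}},\qquad Z_j\equiv r_0+s\,y_j\pmod{x^{\ell_j+\ell-1}},$$ taken as polynomials of degree less than $\ell_i+\ell-1$ and $\ell_j+\ell-1$ respectively. Let $L_{i,j}$ be the largest integer with $x^{L_{i,j}}\mid (y_i-y_j)$. Then $L_{i,j}\le \ell_i-1$, and $s$ is the unique polynomial of degree less than $\ell$ satisfying $$s\,(y_i-y_j)\equiv Z_i-Z_j\pmod{x^{\ell_i+\ell-1}};$$ explicitly, $$s\equiv\frac{(Z_i-Z_j)/x^{L_{i,j}}}{(y_i-y_j)/x^{L_{i,j}}}\pmod{x^{\ell}},$$ where the denominator has nonzero constant term and the quotient means multiplication by its inverse in $F_2[x]/(x^\ell)$.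
   Context: A binary prefix-free code is a set of finite binary strings (codewords) none of which is a prefix of another. $F_2[[x]]$ denotes formal power series over $F_2$; reduction of a power series modulo $x^N$ means truncation to its terms of degree less than $N$. *)

theory Defs
  imports "HOL-Library.Z2" "HOL-Library.Sublist"
    "HOL-Computational_Algebra.Polynomial" "HOL-Computational_Algebra.Formal_Power_Series"
    "HOL-Computational_Algebra.Polynomial_FPS"
begin

definition prefix_free :: "bit list set \<Rightarrow> bool" where
  "prefix_free C \<longleftrightarrow> (\<forall>a\<in>C. \<forall>b\<in>C. a \<noteq> b \<longrightarrow> \<not> prefix a b)"

definition cw_poly :: "bit list \<Rightarrow> bit poly" where
  "cw_poly c = (\<Sum>t<length c. monom (c ! t) t)"

abbreviation xpow :: "nat \<Rightarrow> bit poly" where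
  "xpow N \<equiv> monom 1 N"

definition xval :: "bit poly \<Rightarrow> nat" where
  "xval p = (GREATEST L. xpow L dvd p)"

definition is_reduction :: "bit poly \<Rightarrow> bit fps \<Rightarrow> nat \<Rightarrow> bool" where
  "is_reduction Z f N \<longleftrightarrow> degree Z < N \<and> (\<forall>k<N. coeff Z k = fps_nth f k)"

end

theory Submission
  imports Defs
begin

lemma coeff_cw_poly: "coeff (cw_poly c) t = (if t < length c then c ! t else 0)"
  by (auto simp: cw_poly_def coeff_sum coeff_monom)

lemma xval_order: "p \<noteq> 0 \<Longrightarrow> xval p = order 0 p"
  unfolding xval_def
  by (rule Greatest_equality) (simp_all add: monom_1_dvd_iff)

lemma not_prefix_diff:
  assumes "\<not> prefix a b" "length a \<le> length b"
  shows "\<exists>t<length a. a ! t \<noteq> b ! t"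
proof (rule ccontr)
  assume "\<not> ?thesis"
  hence "take (length a) b = a"
    using assms(2) by (intro nth_equalityI) auto
  hence "prefix a b" by (metis take_is_prefix)
  thus False using assms(1) by simp
qed

lemma dvd_cancel_x:
  fixes q :: "bit poly"
  shows "xpow (a + b) dvd xpow a * q \<longleftrightarrow> xpow b dvd q"
proof -
  have "xpow (a + b) = xpow a * xpow b" by (simp add: mult_monom)
  moreover have "xpow a \<noteq> (0::bit poly)" by simp
  ultimately show ?thesis by (simp add: dvd_mult_cancel_left)
qed

lemma xpow_dvd: "a \<le> b \<Longrightarrow> xpow a dvd (xpow b :: bit poly)"
proof -
  assume "a \<le> b"
  hence "xpow b = xpow a * (xpow (b - a) :: bit poly)" by (simp add: mult_monom)
  thus ?thesis by (metis dvd_triv_left)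
qed

lemma small_dvd_zero:
  fixes p :: "bit poly"
  assumes "xpow l dvd p" "degree p < l"
  shows "p = 0"
proof (rule poly_eqI)
  fix k
  show "coeff p k = coeff 0 k"
  proof (cases "k < l")
    case True thus ?thesis using assms(1) by (simp add: monom_1_dvd_iff')
  next
    case False thus ?thesis using assms(2) by (simp add: coeff_eq_0)
  qed
qed

theorem mainTheorem6:
  fixes C :: "bit list set" and ci cj :: "bit list" and l :: nat
    and r0 :: "bit fps" and s Zi Zj :: "bit poly"
  assumes "l \<ge> 1"
    and "prefix_free C" and "ci \<in> C" and "cj \<in> C" and "ci \<noteq> cj"
    and "length ci \<le> length cj"
    and "degree s < l"
    and "is_reduction Zi (r0 + fps_of_poly (s * cw_poly ci)) (length ci + l - 1)"
    and "is_reduction Zj (r0 + fps_of_poly (s * cw_poly cj)) (length cj + l - 1)"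
  shows "xval (cw_poly ci - cw_poly cj) \<le> length ci - 1
    \<and> xpow (length ci + l - 1) dvd (s * (cw_poly ci - cw_poly cj) - (Zi - Zj))
    \<and> (\<forall>s'. degree s' < l \<and>
          xpow (length ci + l - 1) dvd (s' * (cw_poly ci - cw_poly cj) - (Zi - Zj))
          \<longrightarrow> s' = s)
    \<and> (let L = xval (cw_poly ci - cw_poly cj);
           N = (Zi - Zj) div xpow L;
           D = (cw_poly ci - cw_poly cj) div xpow L
       in coeff D 0 \<noteq> 0
          \<and> (\<forall>u. xpow l dvd (D * u - 1) \<longrightarrow> xpow l dvd (s - N * u)))"
proof -
  define d where "d = cw_poly ci - cw_poly cj"
  define Nn where "Nn = length ci + l - 1"
  define L where "L = xval d"
  have "\<not> prefix ci cj" using assms(2-5) unfolding prefix_free_def by blast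
  then obtain t where t: "t < length ci" "ci ! t \<noteq> cj ! t"
    using not_prefix_diff assms(6) by blast
  have ct: "coeff d t \<noteq> 0" using t assms(6)
    by (cases "ci ! t"; cases "cj ! t") (auto simp: d_def coeff_cw_poly)
  hence d0: "d \<noteq> 0" by auto
  have "\<not> xpow (Suc t) dvd d" using ct unfolding monom_1_dvd_iff' by blast
  hence "order 0 d \<le> t" using d0 by (simp add: monom_1_dvd_iff)
  hence L1: "L \<le> length ci - 1" using t d0 by (simp add: L_def xval_order)
  have LNn: "L + (Nn - L) = Nn" "L \<le> Nn" "l \<le> Nn - L" using L1 t assms(1) by (auto simp: Nn_def)
  have part2: "xpow Nn dvd (s * d - (Zi - Zj))"
  proof -
    have "coeff (s * d - (Zi - Zj)) k = 0" if k: "k < Nn" for k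
    proof -
      have "coeff Zi k = fps_nth r0 k + coeff (s * cw_poly ci) k"
        using assms(8) k by (simp add: is_reduction_def Nn_def)
      moreover have "coeff Zj k = fps_nth r0 k + coeff (s * cw_poly cj) k"
        using assms(9) k assms(6) by (simp add: is_reduction_def Nn_def)
      moreover have "coeff (s * d - (Zi - Zj)) k = (coeff (s * cw_poly ci) k - coeff (s * cw_poly cj) k) - (coeff Zi k - coeff Zj k)"
        by (simp only: d_def right_diff_distrib coeff_diff)
      ultimately show ?thesis by (simp only: add_diff_cancel_left diff_self)
    qed
    thus ?thesis by (simp add: monom_1_dvd_iff')
  qed
  have xL: "xpow L dvd d" using d0 by (simp add: monom_1_dvd_iff L_def xval_order)
  define D where "D = d div xpow L"
  have dD: "d = xpow L * D" using xL by (simp add: D_def)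
  have D0: "D \<noteq> 0" using d0 dD by auto
  have cD: "coeff D 0 \<noteq> 0"
  proof
    assume "coeff D 0 = 0"
    hence "xpow 1 dvd D" by (simp add: monom_1_dvd_iff')
    hence "xpow L * xpow 1 dvd d" unfolding dD by (rule mult_dvd_mono[OF dvd_refl])
    hence "xpow (Suc L) dvd d" by (simp add: mult_monom)
    hence "Suc L \<le> order 0 d" using d0 by (simp add: monom_1_dvd_iff)
    thus False using d0 by (simp add: L_def xval_order)
  qed
  have "order 0 D = 0" using cD by (intro order_0I) (simp add: poly_0_coeff_0)
  have Dcop: "xpow k dvd a * D \<Longrightarrow> xpow k dvd a" for k a
  proof -
    assume h: "xpow k dvd a * D"
    show ?thesis
    proof (cases "a = 0")
      case False
      hence "k \<le> order 0 (a * D)" using h D0 by (simp add: monom_1_dvd_iff)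
      also have "order 0 (a * D) = order 0 a" using False D0 \<open>order 0 D = 0\<close>
        by (simp add: order_mult)
      finally show ?thesis using False by (simp add: monom_1_dvd_iff)
    qed simp
  qed
  have xLZ: "xpow L dvd (Zi - Zj)"
  proof -
    have "xpow L dvd xpow Nn" using LNn by (simp add: xpow_dvd)
    hence "xpow L dvd (s * d - (Zi - Zj))" using part2 dvd_trans by blast
    moreover have "xpow L dvd s * d" using xL by simp
    ultimately have "xpow L dvd s * d - (s * d - (Zi - Zj))" by (metis dvd_diff)
    thus ?thesis by simp
  qed
  define N where "N = (Zi - Zj) div xpow L"
  have ZN: "Zi - Zj = xpow L * N" using xLZ by (simp add: N_def)
  have key: "xpow (Nn - L) dvd (s * D - N)"
  proof -
    have "s * d - (Zi - Zj) = xpow L * (s * D - N)" by (simp add: dD ZN algebra_simps)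
    hence "xpow (L + (Nn - L)) dvd xpow L * (s * D - N)" using part2 LNn by simp
    thus ?thesis by (simp only: dvd_cancel_x)
  qed
  have lk: "xpow l dvd xpow (Nn - L)" using LNn by (simp add: xpow_dvd)
  have part3: "s' = s" if h: "degree s' < l" "xpow Nn dvd (s' * d - (Zi - Zj))" for s'
  proof -
    have "xpow Nn dvd (s' * d - (Zi - Zj)) - (s * d - (Zi - Zj))" using dvd_diff[OF h(2) part2] .
    moreover have "(s' * d - (Zi - Zj)) - (s * d - (Zi - Zj)) = xpow L * ((s' - s) * D)"
      by (simp add: dD algebra_simps)
    ultimately have "xpow (L + (Nn - L)) dvd xpow L * ((s' - s) * D)" using LNn by simp
    hence "xpow (Nn - L) dvd (s' - s) * D" by (simp only: dvd_cancel_x)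
    hence "xpow (Nn - L) dvd (s' - s)" by (rule Dcop)
    hence "xpow l dvd (s' - s)" using lk dvd_trans by blast
    moreover have "degree (s' - s) < l" using h assms(7) degree_diff_le_max
      by (metis le_less_trans max_less_iff_conj)
    ultimately have "s' - s = 0"
      by (rule small_dvd_zero)
    thus ?thesis by simp
  qed
  have part4: "xpow l dvd (s - N * u)" if h: "xpow l dvd (D * u - 1)" for u
  proof -
    have "s - N * u = (s * D - N) * u - s * (D * u - 1)" by (simp add: algebra_simps)
    moreover have "xpow l dvd (s * D - N) * u" using key lk dvd_trans dvd_mult2 by blast
    moreover have "xpow l dvd s * (D * u - 1)" using h by simp
    ultimately show ?thesis by (metis dvd_diff)
  qed
  show ?thesis
    using L1 part2 part3 part4 cD
    unfolding Let_def d_def[symmetric] Nn_def[symmetric] L_def[symmetric] N_def[symmetric] D_def[symmetric]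
    by blast
qed

end
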